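(* Let $a\in\mathbb{R}$ and $\gamma>0$, and assume \[ P=\tfrac12(1-\gamma^2a^2)+\sqrt{\gamma^2(-1+\gamma^2)+(\gamma^2a^2-1)^2/4}>1. \] Assume further the curvature condition $P>2\gamma-1$ and the strong negativity condition \[ (P+2\gamma^2-1)\left(P-1-2\sqrt{\gamma^2-P}\right)^2\ge (P-1)\left((P+1)^2-4\gamma^2\right). \] Then the closed-loop system of $x(t+1)=ax(t)+bu(t)+w(t)$, $x(0)=x_0$, $y(t)=x(t)+v(t)$ with unknown $b\in\{-1,1\}$, controlled by the certainty-equivalence dead-beat controller (defined in the context), has gain from $(w,v)$ to $x$ bounded above by $\gamma$; that is, for both $b\in\{-1,1\}$, all $T\ge 0$, all real sequences $w,v$ and all $x_0\in\mathbb{R}$, \[ \sum_{\tau=0}^{T+1}x(\tau)^2-\gamma^2\sum_{\tau=0}^{T}w(\tau)^2-\gamma^2\sum_{\tau=0}^{T+1}v(\tau)^2-Px(0)^2\le 0. \]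
   Context: Set $\hat a=\frac{aP}{P+\gamma^2-1}$ and $\hat g=\frac{\gamma^2a}{P+\gamma^2-1}$. For $i\in\{-1,1\}$ the controller runs observers $\hat x_i(t+1)=\hat a\hat x_i(t)+iu(t)+\hat gy(t)$, $\hat x_i(0)=0$, and cumulative costs $l_i(t+1)=l_i(t)-P\hat x_i(t)^2-\gamma^2y(t)^2+\frac{(P\hat x_i(t)+\gamma^2y(t))^2}{P+\gamma^2-1}$, $l_i(0)=0$ (note $l_i(t+1)$ depends only on $\hat x_i(t)$ and $y(t)$). The certainty-equivalence dead-beat controller is \[ u(t)=\begin{cases}-(\hat a\hat x_1(t)+\hat gy(t)) & \text{if } l_1(t+1)\ge l_{-1}(t+1),\\ \hat a\hat x_{-1}(t)+\hat gy(t) & \text{if } l_1(t+1)<l_{-1}(t+1).\end{cases} \] *)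

theory Defs
  imports Complex_Main
begin

definition ahat :: "real \<Rightarrow> real \<Rightarrow> real \<Rightarrow> real" where
  "ahat a \<gamma> P = a * P / (P + \<gamma>^2 - 1)"

definition ghat :: "real \<Rightarrow> real \<Rightarrow> real \<Rightarrow> real" where
  "ghat a \<gamma> P = \<gamma>^2 * a / (P + \<gamma>^2 - 1)"

definition lupd :: "real \<Rightarrow> real \<Rightarrow> real \<Rightarrow> real \<Rightarrow> real \<Rightarrow> real" where
  "lupd \<gamma> P l xh y = l - P * xh^2 - \<gamma>^2 * y^2 + (P * xh + \<gamma>^2 * y)^2 / (P + \<gamma>^2 - 1)"

text \<open>Closed-loop state at time t: (x(t), xhat_1(t), xhat_{-1}(t), l_1(t), l_{-1}(t)).\<close>
fun closed_loop :: "real \<Rightarrow> real \<Rightarrow> real \<Rightarrow> real \<Rightarrow> (nat \<Rightarrow> real) \<Rightarrow> (nat \<Rightarrow> real) \<Rightarrow> real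
    \<Rightarrow> nat \<Rightarrow> real \<times> real \<times> real \<times> real \<times> real" where
  "closed_loop a \<gamma> P b w v x0 0 = (x0, 0, 0, 0, 0)"
| "closed_loop a \<gamma> P b w v x0 (Suc t) =
     (case closed_loop a \<gamma> P b w v x0 t of (x, xh1, xhm, l1, lm) \<Rightarrow>
       (let y = x + v t;
            l1' = lupd \<gamma> P l1 xh1 y;
            lm' = lupd \<gamma> P lm xhm y;
            u = (if l1' \<ge> lm' then - (ahat a \<gamma> P * xh1 + ghat a \<gamma> P * y)
                 else ahat a \<gamma> P * xhm + ghat a \<gamma> P * y)
        in (a * x + b * u + w t,
            ahat a \<gamma> P * xh1 + u + ghat a \<gamma> P * y,
            ahat a \<gamma> P * xhm - u + ghat a \<gamma> P * y,
            l1', lm')))"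

definition cl_x :: "real \<Rightarrow> real \<Rightarrow> real \<Rightarrow> real \<Rightarrow> (nat \<Rightarrow> real) \<Rightarrow> (nat \<Rightarrow> real) \<Rightarrow> real
    \<Rightarrow> nat \<Rightarrow> real" where
  "cl_x a \<gamma> P b w v x0 t = fst (closed_loop a \<gamma> P b w v x0 t)"

end

theory Submission
  imports Defs
begin

lemma q_le:
  fixes P g l x y :: real
  assumes "P > 1" "g > 0"
  shows "lupd g P l x y \<le> l + P/(P-1) * x^2"
proof -
  have "g^2 \<ge> 0" by simp
  hence S: "P + g^2 - 1 > 0" using assms by linarith
  have n1: "P + g*g - 1 \<noteq> 0" "P - 1 \<noteq> 0" using S assms by (auto simp: power2_eq_square)
  define D where "D = (P * x + g^2 * y)^2 / (P + g^2 - 1)"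
  define c where "c = P/(P-1)"
  have hD: "(P + g^2 - 1) * D = (P * x + g^2 * y)^2" using S unfolding D_def by simp
  have hc: "(P-1)*c = P" using assms unfolding c_def by simp
  have "(P-1)*(P + g^2 - 1) * (l + c * x^2 - (l - P * x^2 - g^2 * y^2 + D)) = g^2 * ((P-1)*y - P*x)^2"
    using hD hc by algebra
  hence "(P-1)*(P + g^2 - 1) * (l + P/(P-1) * x^2 - lupd g P l x y) = g^2 * ((P-1)*y - P*x)^2"
    unfolding lupd_def D_def c_def .
  moreover have "(P-1)*(P + g^2 - 1) > 0" using S assms by simp
  ultimately show ?thesis
    by (metis diff_ge_0_iff_ge zero_le_mult_iff zero_le_power2 linorder_not_le less_eq_real_def)
qed

lemma disj_key:
  fixes G P s u y :: real
  assumes "s \<ge> 0" "P > 1" "G > 0" "G*(P-1) \<ge> 2*s*(P+G-1)"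
  shows "s*\<bar>u\<bar> \<le> G*(P-1)*\<bar>y\<bar> \<or> s*\<bar>u\<bar> \<le> G*\<bar>(P+2*G-1)*y - u\<bar>"
proof (rule ccontr)
  let ?K = "P+2*G-1"
  assume "\<not> ?thesis"
  hence h1: "G*(P-1)*\<bar>y\<bar> < s*\<bar>u\<bar>" and h2: "G*\<bar>?K*y - u\<bar> < s*\<bar>u\<bar>" by auto
  have Kpos: "?K > 0" using assms by simp
  have tri: "\<bar>u\<bar> \<le> ?K*\<bar>y\<bar> + \<bar>?K*y - u\<bar>"
    using abs_triangle_ineq4[of "?K*y" "?K*y - u"] Kpos by (simp add: abs_mult)
  have "G*(P-1)*\<bar>u\<bar> \<le> (P-1)*(?K*(G*\<bar>y\<bar>)) + (P-1)*(G*\<bar>?K*y - u\<bar>)"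
    using mult_left_mono[OF tri, of "G*(P-1)"] assms by (simp add: algebra_simps)
  also have "(P-1)*(?K*(G*\<bar>y\<bar>)) \<le> ?K*(s*\<bar>u\<bar>)"
    using mult_left_mono[OF less_imp_le[OF h1], of ?K] Kpos by (simp add: algebra_simps)
  also have "(P-1)*(G*\<bar>?K*y - u\<bar>) < (P-1)*(s*\<bar>u\<bar>)"
    using h2 assms by simp
  finally have "G*(P-1)*\<bar>u\<bar> < 2*s*(P+G-1)*\<bar>u\<bar>" by (simp add: algebra_simps)
  moreover have "G*(P-1)*\<bar>u\<bar> \<ge> 2*s*(P+G-1)*\<bar>u\<bar>"
    using mult_right_mono[OF assms(4), of "\<bar>u\<bar>"] by simp
  ultimately show False by simp
qed

lemma sq_le_from_abs:
  fixes A B :: real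
  assumes "0 \<le> A" "A \<le> B"
  shows "A^2 \<le> B^2"
  using assms by (simp add: power_mono)

lemma min_key:
  fixes a g P lj lk e y :: real
  assumes P1: "P > 1" and g0: "g > 0" and PG: "P \<le> g^2"
    and ric: "P*g^2*a^2 = (g^2-P)*(P+g^2-1)"
    and C: "g^2*(P-1) \<ge> 2*sqrt(g^2-P)*(P+g^2-1)"
    and lj: "lj \<le> 0" and lk: "lk + P/(P-1)*e^2 \<le> 0"
  shows "lupd g P lj 0 y + P/(P-1)*(ahat a g P * e + 2*ghat a g P * y)^2 \<le> 0
       \<or> lupd g P lk e y + P/(P-1)*(ahat a g P * e + 2*ghat a g P * y)^2 \<le> 0"
proof -
  define G where "G = g^2"
  define S where "S = P + G - 1"
  define s where "s = sqrt (G - P)"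
  define u where "u = P*e + 2*G*y"
  define c where "c = P/(P-1)"
  define F where "F = ahat a g P * e + 2*ghat a g P * y"
  define D0 where "D0 = (P * 0 + g^2 * y)^2 / (P + g^2 - 1)"
  define De where "De = (P * e + g^2 * y)^2 / (P + g^2 - 1)"
  have G0: "G > 0" using g0 unfolding G_def by simp
  have S0: "S > 0" using P1 G0 unfolding S_def by simp
  have s0: "s \<ge> 0" and ss: "s^2 = G - P" using PG unfolding s_def G_def by auto
  have hc: "(P-1)*c = P" using P1 unfolding c_def by simp
  have S': "P + g^2 - 1 = S" unfolding S_def G_def ..
  have hF: "S*F = a*u"
  proof -
    have "S*F = (S*(a*P/S))*e + 2*((S*(g^2*a/S))*y)" unfolding F_def ahat_def ghat_def S'
      by (simp add: algebra_simps)
    also have "\<dots> = a*u" using S0 unfolding u_def G_def by (simp add: algebra_simps)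
    finally show ?thesis .
  qed
  have hD0: "S*D0 = (G*y)^2" using S0 unfolding D0_def S_def G_def by simp
  have hDe: "S*De = (P*e+G*y)^2" using S0 unfolding De_def S_def G_def by simp
  have ric': "P*G*a^2 = (G-P)*S" using ric unfolding G_def S_def by simp
  have pos: "S*(P-1)*G > 0" using S0 P1 G0 by simp
  have dk: "s*\<bar>u\<bar> \<le> G*(P-1)*\<bar>y\<bar> \<or> s*\<bar>u\<bar> \<le> G*\<bar>(P+2*G-1)*y - u\<bar>"
    by (rule disj_key) (use s0 P1 G0 C in \<open>auto simp: s_def S_def G_def\<close>)
  thus ?thesis
  proof
    assume h: "s*\<bar>u\<bar> \<le> G*(P-1)*\<bar>y\<bar>"
    have "(s*\<bar>u\<bar>)^2 \<le> (G*(P-1)*\<bar>y\<bar>)^2" by (rule sq_le_from_abs) (use h s0 in auto)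
    hence Y: "(G-P)*u^2 - G^2*(P-1)^2*y^2 \<le> 0" using ss by (simp add: power_mult_distrib)
    have "S*(S*(P-1)*G*(-G*y^2 + D0 + c*F^2)) = S*((G-P)*u^2 - G^2*(P-1)^2*y^2)"
      using hF hD0 hc ric' unfolding S_def by algebra
    hence "S*(P-1)*G*(-G*y^2 + D0 + c*F^2) = (G-P)*u^2 - G^2*(P-1)^2*y^2" using S0 by simp
    hence "S*(P-1)*G*(-G*y^2 + D0 + c*F^2) \<le> 0" using Y by simp
    hence "-G*y^2 + D0 + c*F^2 \<le> 0" using pos by (meson mult_pos_pos not_le)
    hence "lj - P*0^2 - g^2*y^2 + D0 + c*F^2 \<le> 0" using lj unfolding G_def by simp
    thus ?thesis unfolding lupd_def D0_def c_def F_def by simp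
  next
    assume h: "s*\<bar>u\<bar> \<le> G*\<bar>(P+2*G-1)*y - u\<bar>"
    have "(s*\<bar>u\<bar>)^2 \<le> (G*\<bar>(P+2*G-1)*y - u\<bar>)^2" by (rule sq_le_from_abs) (use h s0 in auto)
    hence Y: "(G-P)*u^2 - G^2*((P+2*G-1)*y - u)^2 \<le> 0" using ss by (simp add: power_mult_distrib)
    have "S*(S*(P-1)*G*(-P*e^2 - G*y^2 + De + c*F^2 - c*e^2)) = S*((G-P)*u^2 - G^2*((P+2*G-1)*y - u)^2)"
      using hF hDe hc ric' unfolding S_def u_def by algebra
    hence "S*(P-1)*G*(-P*e^2 - G*y^2 + De + c*F^2 - c*e^2) = (G-P)*u^2 - G^2*((P+2*G-1)*y - u)^2" using S0 by simp
    hence "S*(P-1)*G*(-P*e^2 - G*y^2 + De + c*F^2 - c*e^2) \<le> 0" using Y by simp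
    hence "-P*e^2 - G*y^2 + De + c*F^2 - c*e^2 \<le> 0" using pos by (meson mult_pos_pos not_le)
    hence "lk - P*e^2 - g^2*y^2 + De + c*F^2 \<le> 0" using lk unfolding G_def c_def by simp
    thus ?thesis unfolding lupd_def De_def c_def F_def by simp
  qed
qed

lemma step_inv:
  fixes a g P l1 lm h1 hm y :: real
  assumes P1: "P > 1" and g0: "g > 0" and PG: "P \<le> g^2"
    and ric: "P*g^2*a^2 = (g^2-P)*(P+g^2-1)"
    and C: "g^2*(P-1) \<ge> 2*sqrt(g^2-P)*(P+g^2-1)"
    and i1: "l1 + P/(P-1)*h1^2 \<le> 0" and i2: "lm + P/(P-1)*hm^2 \<le> 0" and i3: "h1 = 0 \<or> hm = 0"
  defines "l1' \<equiv> lupd g P l1 h1 y" and "lm' \<equiv> lupd g P lm hm y"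
  defines "u \<equiv> (if l1' \<ge> lm' then - (ahat a g P * h1 + ghat a g P * y)
                 else ahat a g P * hm + ghat a g P * y)"
  shows "l1' + P/(P-1)*(ahat a g P * h1 + u + ghat a g P * y)^2 \<le> 0 \<and>
         lm' + P/(P-1)*(ahat a g P * hm - u + ghat a g P * y)^2 \<le> 0 \<and>
         (ahat a g P * h1 + u + ghat a g P * y = 0 \<or> ahat a g P * hm - u + ghat a g P * y = 0)"
proof -
  define F where "F = ahat a g P * (h1 + hm) + 2*ghat a g P * y"
  have b1: "l1' \<le> 0" using q_le[OF P1 g0, of l1 h1 y] i1 unfolding l1'_def by linarith
  have b2: "lm' \<le> 0" using q_le[OF P1 g0, of lm hm y] i2 unfolding lm'_def by linarith
  have l1z: "l1 \<le> 0" and lmz: "lm \<le> 0"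
  proof -
    have "P/(P-1)*h1^2 \<ge> 0" "P/(P-1)*hm^2 \<ge> 0" using P1 by auto
    thus "l1 \<le> 0" "lm \<le> 0" using i1 i2 by linarith+
  qed
  have M: "l1' + P/(P-1)*F^2 \<le> 0 \<or> lm' + P/(P-1)*F^2 \<le> 0"
    using i3
  proof
    assume h: "h1 = 0"
    have "lupd g P l1 0 y + P/(P-1)*(ahat a g P * hm + 2*ghat a g P * y)^2 \<le> 0
       \<or> lupd g P lm hm y + P/(P-1)*(ahat a g P * hm + 2*ghat a g P * y)^2 \<le> 0"
      by (rule min_key[OF P1 g0 PG ric C l1z i2])
    thus ?thesis unfolding l1'_def lm'_def F_def h by simp
  next
    assume h: "hm = 0"
    have "lupd g P lm 0 y + P/(P-1)*(ahat a g P * h1 + 2*ghat a g P * y)^2 \<le> 0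
       \<or> lupd g P l1 h1 y + P/(P-1)*(ahat a g P * h1 + 2*ghat a g P * y)^2 \<le> 0"
      by (rule min_key[OF P1 g0 PG ric C lmz i1])
    thus ?thesis unfolding l1'_def lm'_def F_def h by auto
  qed
  show ?thesis
  proof (cases "l1' \<ge> lm'")
    case True
    hence u: "u = - (ahat a g P * h1 + ghat a g P * y)" unfolding u_def by simp
    have "lm' + P/(P-1)*F^2 \<le> 0" using M True by linarith
    moreover have "ahat a g P * hm - u + ghat a g P * y = F" unfolding u F_def by (simp add: algebra_simps)
    ultimately show ?thesis using b1 u by simp
  next
    case False
    hence u: "u = ahat a g P * hm + ghat a g P * y" unfolding u_def by simp
    have "l1' + P/(P-1)*F^2 \<le> 0" using M False by linarith
    moreover have "ahat a g P * h1 + u + ghat a g P * y = F" unfolding u F_def by (simp add: algebra_simps)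
    ultimately show ?thesis using b2 u by simp
  qed
qed

lemma diss_step:
  fixes a g P l h x w v :: real
  assumes P1: "P > 1" and g0: "g > 0" and PG: "P \<le> g^2"
    and ric: "P*g^2*a^2 = (g^2-P)*(P+g^2-1)"
  shows "x^2 - g^2*w^2 - g^2*v^2 + P*(a*x + w - ahat a g P * h - ghat a g P * (x+v))^2
          - P*(x-h)^2 - (lupd g P l h (x+v) - l) \<le> 0"
proof -
  define G where "G = g^2"
  define S where "S = P + G - 1"
  define y where "y = x + v"
  define D where "D = (P * h + g^2 * y)^2 / (P + g^2 - 1)"
  define A where "A = ahat a g P * h + ghat a g P * y"
  define Z where "Z = x^2 - G*w^2 - G*(y-x)^2 + P*(a*x + w - A)^2 - P*(x-h)^2 - (- P*h^2 - G*y^2 + D)"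
  have G0: "G > 0" using g0 unfolding G_def by simp
  have S0: "S > 0" using P1 G0 unfolding S_def by simp
  have S': "P + g^2 - 1 = S" unfolding S_def G_def ..
  have hD: "S*D = (P*h+G*y)^2" using S0 unfolding D_def S' G_def by simp
  have hA: "S*A = a*(P*h+G*y)"
  proof -
    have "S*A = (S*(a*P/S))*h + (S*(g^2*a/S))*y" unfolding A_def ahat_def ghat_def S'
      by (simp add: algebra_simps)
    also have "\<dots> = a*(P*h+G*y)" using S0 unfolding G_def by (simp add: algebra_simps)
    finally show ?thesis .
  qed
  have ric': "P*G*a^2 = (G-P)*S" using ric unfolding G_def S_def by simp
  have Zle: "Z \<le> 0"
  proof (cases "G = P")
    case True
    hence "P*G*a^2 = 0" using ric' by simp
    hence a0: "a = 0" using P1 G0 by simp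
    have "S*(S*Z) = -S*(S*x - P*h - G*y)^2"
      using hD hA True a0 unfolding Z_def S_def by algebra
    hence "S*(S*Z) \<le> 0" using S0 by simp
    thus ?thesis using S0 by (meson mult_pos_pos not_le)
  next
    case False
    hence GP: "G - P > 0" using PG unfolding G_def by simp
    have "S*(S*((G-P)*Z)) = - ((S*(G-P)*w - P*a*(S*x - P*h - G*y))^2)"
      using hD hA ric' unfolding Z_def S_def by algebra
    hence "S*(S*((G-P)*Z)) \<le> 0" by simp
    hence "(G-P)*Z \<le> 0" using S0 by (meson mult_pos_pos not_le)
    thus ?thesis using GP by (meson mult_pos_pos not_le)
  qed
  thus ?thesis unfolding Z_def A_def D_def y_def G_def lupd_def by (simp add: algebra_simps)
qed

lemma cl_suc:
  assumes e: "closed_loop a g P b w v x0 t = (x, h1, hm, l1, lm)"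
  defines "y \<equiv> x + v t"
  defines "U \<equiv> (if lupd g P l1 h1 y \<ge> lupd g P lm hm y then - (ahat a g P * h1 + ghat a g P * y)
                 else ahat a g P * hm + ghat a g P * y)"
  shows "closed_loop a g P b w v x0 (Suc t) = (a*x + b*U + w t, ahat a g P * h1 + U + ghat a g P * y,
            ahat a g P * hm - U + ghat a g P * y, lupd g P l1 h1 y, lupd g P lm hm y)"
  using e unfolding U_def y_def by (simp add: Let_def)

lemma inv_cl:
  fixes a g P b x0 :: real and w v :: "nat \<Rightarrow> real"
  assumes P1: "P > 1" and g0: "g > 0" and PG: "P \<le> g^2"
    and ric: "P*g^2*a^2 = (g^2-P)*(P+g^2-1)"
    and C: "g^2*(P-1) \<ge> 2*sqrt(g^2-P)*(P+g^2-1)"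
  shows "case closed_loop a g P b w v x0 t of (x,h1,hm,l1,lm) \<Rightarrow>
           l1 + P/(P-1)*h1^2 \<le> 0 \<and> lm + P/(P-1)*hm^2 \<le> 0 \<and> (h1 = 0 \<or> hm = 0)"
proof (induction t)
  case 0
  then show ?case by simp
next
  case (Suc t)
  obtain x h1 hm l1 lm where e: "closed_loop a g P b w v x0 t = (x, h1, hm, l1, lm)"
    by (metis prod_cases5)
  from Suc.IH have i: "l1 + P/(P-1)*h1^2 \<le> 0" "lm + P/(P-1)*hm^2 \<le> 0" "h1 = 0 \<or> hm = 0"
    by (simp_all add: e)
  show ?case
    unfolding cl_suc[OF e]
    using step_inv[OF P1 g0 PG ric C i, of "x + v t"] by simp
qed

lemma diss_cl:
  fixes a g P b x0 :: real and w v :: "nat \<Rightarrow> real"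
  assumes P1: "P > 1" and g0: "g > 0" and PG: "P \<le> g^2"
    and ric: "P*g^2*a^2 = (g^2-P)*(P+g^2-1)" and b: "b \<in> {-1, 1}"
  shows "case closed_loop a g P b w v x0 t of (x,h1,hm,l1,lm) \<Rightarrow>
           (\<Sum>\<tau><t. (cl_x a g P b w v x0 \<tau>)^2 - g^2*(w \<tau>)^2 - g^2*(v \<tau>)^2) - P*x0^2
            + P*(x - (if b = 1 then h1 else hm))^2 - (if b = 1 then l1 else lm) \<le> 0"
proof (induction t)
  case 0
  then show ?case by simp
next
  case (Suc t)
  obtain x h1 hm l1 lm where e: "closed_loop a g P b w v x0 t = (x, h1, hm, l1, lm)"
    by (metis prod_cases5)
  have cx: "cl_x a g P b w v x0 t = x" unfolding cl_x_def e by simp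
  define hb where "hb = (if b = 1 then h1 else hm)"
  define lb where "lb = (if b = 1 then l1 else lm)"
  define Sm where "Sm = (\<Sum>\<tau><t. (cl_x a g P b w v x0 \<tau>)^2 - g^2*(w \<tau>)^2 - g^2*(v \<tau>)^2)"
  from Suc.IH have IH: "Sm - P*x0^2 + P*(x - hb)^2 - lb \<le> 0"
    by (simp add: e Sm_def hb_def lb_def)
  have ds: "x^2 - g^2*(w t)^2 - g^2*(v t)^2 + P*(a*x + w t - ahat a g P * hb - ghat a g P * (x+v t))^2
          - P*(x-hb)^2 - (lupd g P lb hb (x+v t) - lb) \<le> 0"
    by (rule diss_step[OF P1 g0 PG ric])
  show ?case
  proof (cases "b = 1")
    case True
    have cx1: "cl_x a g P 1 w v x0 t = x" using cx True by simp
    show ?thesis unfolding cl_suc[OF e] using IH ds True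
      by (simp add: cx1 Sm_def hb_def lb_def algebra_simps)
  next
    case False
    hence bm: "b = -1" using b by simp
    have cx1: "cl_x a g P (-1) w v x0 t = x" using cx bm by simp
    show ?thesis unfolding cl_suc[OF e] using IH ds bm
      by (simp add: cx1 Sm_def hb_def lb_def algebra_simps)
  qed
qed

theorem theorem6:
  fixes a \<gamma> P b x0 :: real and w v :: "nat \<Rightarrow> real" and T :: nat
  assumes g_pos: "\<gamma> > 0"
    and P_def: "P = (1 - \<gamma>^2 * a^2) / 2 + sqrt (\<gamma>^2 * (-1 + \<gamma>^2) + (\<gamma>^2 * a^2 - 1)^2 / 4)"
    and P_gt1: "P > 1"
    and curv: "P > 2 * \<gamma> - 1"
    and strong_neg: "(P + 2 * \<gamma>^2 - 1) * (P - 1 - 2 * sqrt (\<gamma>^2 - P))^2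
                       \<ge> (P - 1) * ((P + 1)^2 - 4 * \<gamma>^2)"
    and b: "b \<in> {-1, 1}"
  shows "(\<Sum>\<tau>\<in>{0..T+1}. (cl_x a \<gamma> P b w v x0 \<tau>)^2)
         - \<gamma>^2 * (\<Sum>\<tau>\<in>{0..T}. (w \<tau>)^2)
         - \<gamma>^2 * (\<Sum>\<tau>\<in>{0..T+1}. (v \<tau>)^2)
         - P * (cl_x a \<gamma> P b w v x0 0)^2 \<le> 0"
proof -
  define G where "G = \<gamma>^2"
  define R where "R = \<gamma>^2 * (-1 + \<gamma>^2) + (\<gamma>^2 * a^2 - 1)^2 / 4"
  have G0: "G > 0" using g_pos unfolding G_def by simp
  have Ga: "G*a^2 \<ge> 0" using G0 by simp
  have sR: "sqrt R = P - (1 - G*a^2)/2" using P_def unfolding R_def G_def by simp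
  have "sqrt R > 0" using sR P_gt1 Ga by simp
  hence "R > 0" by simp
  hence sqR: "(sqrt R)^2 = R" by simp
  have "(P - (1 - G*a^2)/2)^2 = R" using sR sqR by metis
  hence eqR: "(P - (1 - G*a^2)/2)^2 = G*(-1+G) + (G*a^2-1)^2/4" unfolding R_def G_def .
  have ric: "P*G*a^2 = (G-P)*(P+G-1)"
  proof -
    have "4*(P - (1 - G*a^2)/2)^2 = 4*(G*(-1+G) + (G*a^2-1)^2/4)" using eqR by simp
    thus ?thesis by (simp add: field_simps power2_eq_square)
  qed
  have "(G-P)*(G+P+G*a^2-1) = G^2*a^2" using ric by algebra
  moreover have "G+P+G*a^2-1 > 0" using G0 P_gt1 Ga by linarith
  ultimately have PG: "P \<le> G"
    by (smt (verit) mult_neg_pos zero_le_mult_iff zero_le_power2)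
  define s where "s = sqrt (G - P)"
  have s0: "s \<ge> 0" and ss: "s^2 = G - P" using PG unfolding s_def by auto
  have "P + 1 > 2*\<gamma>" using curv by simp
  hence "(P+1)^2 > (2*\<gamma>)^2" using g_pos by (intro power_strict_mono) auto
  hence "(P-1)^2 > (2*s)^2" using ss unfolding G_def by (simp add: power2_eq_square algebra_simps)
  hence Ps: "P - 1 - 2*s > 0"
    by (smt (verit, best) P_gt1 s0 power_mono)
  have sn: "(P + 2*G - 1) * (P - 1 - 2*s)^2 \<ge> (P - 1) * ((P + 1)^2 - 4*G)"
    using strong_neg unfolding G_def s_def .
  have "(P + 2*G - 1) * (P - 1 - 2*s)^2 - (P - 1) * ((P + 1)^2 - 4*G)
        = 2*((P - 1 - 2*s)*(G*(P-1) - 2*s*(P+G-1)))"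
    using ss by algebra
  hence "(P - 1 - 2*s)*(G*(P-1) - 2*s*(P+G-1)) \<ge> 0" using sn by linarith
  hence Cc: "G*(P-1) \<ge> 2*s*(P+G-1)" using Ps by (simp add: zero_le_mult_iff)
  have PG': "P \<le> \<gamma>^2" using PG unfolding G_def .
  have ric': "P*\<gamma>^2*a^2 = (\<gamma>^2-P)*(P+\<gamma>^2-1)" using ric unfolding G_def .
  have C': "\<gamma>^2*(P-1) \<ge> 2*sqrt(\<gamma>^2-P)*(P+\<gamma>^2-1)" using Cc unfolding G_def s_def .
  obtain x h1 hm l1 lm where e: "closed_loop a \<gamma> P b w v x0 (Suc T) = (x, h1, hm, l1, lm)"
    by (metis prod_cases5)
  have I: "l1 + P/(P-1)*h1^2 \<le> 0" "lm + P/(P-1)*hm^2 \<le> 0"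
    using inv_cl[OF P_gt1 g_pos PG' ric' C', of b w v x0 "Suc T", unfolded e] by simp_all
  define hb where "hb = (if b = 1 then h1 else hm)"
  define lb where "lb = (if b = 1 then l1 else lm)"
  have Ib: "lb + P/(P-1)*hb^2 \<le> 0" using I unfolding hb_def lb_def by simp
  have D: "(\<Sum>\<tau><Suc T. (cl_x a \<gamma> P b w v x0 \<tau>)^2 - \<gamma>^2*(w \<tau>)^2 - \<gamma>^2*(v \<tau>)^2) - P*x0^2
            + P*(x - hb)^2 - lb \<le> 0"
    using diss_cl[OF P_gt1 g_pos PG' ric' b, of w v x0 "Suc T", unfolded e] by (simp add: hb_def lb_def)
  have cxT: "cl_x a \<gamma> P b w v x0 (Suc T) = x" unfolding cl_x_def e by simp
  have cx0: "cl_x a \<gamma> P b w v x0 0 = x0" unfolding cl_x_def by simp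
  have sq: "(P-1)*(P/(P-1)*hb^2 - x^2 + P*(x-hb)^2) = ((P-1)*x - P*hb)^2"
    using P_gt1 by (simp add: field_simps power2_eq_square)
  hence le1: "x^2 - P*(x-hb)^2 \<le> P/(P-1)*hb^2"
    using P_gt1 by (smt (verit) mult_pos_neg zero_le_power2)
  have vn: "\<gamma>^2 * (v (Suc T))^2 \<ge> 0" by simp
  have sums: "(\<Sum>\<tau>\<in>{0..T+1}. (cl_x a \<gamma> P b w v x0 \<tau>)^2)
         - \<gamma>^2 * (\<Sum>\<tau>\<in>{0..T}. (w \<tau>)^2)
         - \<gamma>^2 * (\<Sum>\<tau>\<in>{0..T+1}. (v \<tau>)^2)
         = (\<Sum>\<tau><Suc T. (cl_x a \<gamma> P b w v x0 \<tau>)^2 - \<gamma>^2*(w \<tau>)^2 - \<gamma>^2*(v \<tau>)^2)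
           + x^2 - \<gamma>^2 * (v (Suc T))^2"
  proof -
    have a1: "{0..T+1} = {..<Suc (Suc T)}" "{0..T} = {..<Suc T}" by auto
    show ?thesis unfolding a1 sum.lessThan_Suc[of _ "Suc T"] cxT
      by (simp add: sum_subtractf sum.distrib sum_distrib_left algebra_simps)
  qed
  show ?thesis unfolding cx0 using sums D Ib le1 vn by linarith
qed

end
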